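(* Let $K$ be a convex domain of minimal width $w$. Then $h_K>0$ if and only if there is $t>0$ such that $\omega_K(\tau)\le\pi/2$ for all $0\le\tau\le t$. Moreover, every $s\in[0,w]$ with $\omega_-(s)\le \pi/2\le\omega_+(s)$ satisfies $h_K\ge s$ (in particular $h_K\ge \mu_K:=\max\{s\in[0,w]:\omega_-(s)\le\pi/2\le\omega_+(s)\}$).
   Context: A convex domain is a compact convex subset $K\subset\mathbb{C}$ with nonempty interior. Its minimal width is $w=\min_{\gamma}\left(\max_{z\in K}\mathrm{Re}(ze^{i\gamma})-\min_{z\in K}\mathrm{Re}(ze^{i\gamma})\right)$. A unit vector $\nu$ is an outer normal to $K$ at $z\in\partial K$ if $\mathrm{Re}((u-z)\overline{\nu})\le0$ for all $u\in K$. For $\theta,\tau\in\mathbb{R}$ let $d_{\mathbb{T}}(\theta,\tau)$ be the distance of $\theta-\tau$ from $2\pi\mathbb{Z}$. For $0\le t<w$, $\omega_K(t):=\sup\{d_{\mathbb{T}}(\arg\nu,\arg\mu): \nu,\mu \text{ outer unit normals to } K \text{ at } z,z'\in\partial K,\ |z-z'|\le t\}$. Set $\omega_-(0):=0$, $\omega_-(s):=\lim_{r\to s^-}\omega_K(r)$ for $0<s\le w$, $\omega_+(s):=\lim_{r\to s^+}\omega_K(r)$ for $0\le s<w$, and $\omega_+(w):=\pi$. For an outer unit normal $\nu$ at $\zeta$, $(\zeta+\nu\mathbb{R})\cap K=[\zeta,\zeta-h\nu]$ with $h\ge0$; the local depth $h_K(\zeta)$ is the maximum of such $h$ over all outer unit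 normals at $\zeta$, and $h_K:=\inf_{\zeta\in\partial K}h_K(\zeta)$. *)

theory Defs
  imports "HOL-Analysis.Analysis"
begin

definition convex_domain :: "complex set \<Rightarrow> bool" where
  "convex_domain K \<longleftrightarrow> compact K \<and> convex K \<and> interior K \<noteq> {}"

definition dir_width :: "complex set \<Rightarrow> real \<Rightarrow> real" where
  "dir_width K \<gamma> = (SUP z\<in>K. Re (z * cis \<gamma>)) - (INF z\<in>K. Re (z * cis \<gamma>))"

definition min_width :: "complex set \<Rightarrow> real" where
  "min_width K = (INF \<gamma>\<in>(UNIV::real set). dir_width K \<gamma>)"

definition outer_normal :: "complex set \<Rightarrow> complex \<Rightarrow> complex \<Rightarrow> bool" where
  "outer_normal K z \<nu> \<longleftrightarrow> z \<in> frontier K \<and> norm \<nu> = 1 \<and>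
     (\<forall>u\<in>K. Re ((u - z) * cnj \<nu>) \<le> 0)"

definition dT :: "real \<Rightarrow> real \<Rightarrow> real" where
  "dT \<theta> \<tau> = (INF k\<in>(UNIV::int set). \<bar>\<theta> - \<tau> - 2 * pi * real_of_int k\<bar>)"

definition omegaK :: "complex set \<Rightarrow> real \<Rightarrow> real" where
  "omegaK K t = Sup {dT (Arg \<nu>) (Arg \<mu>) | \<nu> \<mu> z z'.
       outer_normal K z \<nu> \<and> outer_normal K z' \<mu> \<and> dist z z' \<le> t}"

definition omega_minus :: "complex set \<Rightarrow> real \<Rightarrow> real" where
  "omega_minus K s = (if s = 0 then 0 else Lim (at_left s) (omegaK K))"

definition omega_plus :: "complex set \<Rightarrow> real \<Rightarrow> real" where
  "omega_plus K s = (if s < min_width K then Lim (at_right s) (omegaK K) else pi)"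

text \<open>Depth along the inner normal direction: (zeta + nu R) \<inter> K = [zeta, zeta - h nu].\<close>
definition normal_depth :: "complex set \<Rightarrow> complex \<Rightarrow> complex \<Rightarrow> real" where
  "normal_depth K \<zeta> \<nu> = Sup {h. h \<ge> 0 \<and> \<zeta> - complex_of_real h * \<nu> \<in> K}"

definition local_depth :: "complex set \<Rightarrow> complex \<Rightarrow> real" where
  "local_depth K \<zeta> = Sup {normal_depth K \<zeta> \<nu> | \<nu>. outer_normal K \<zeta> \<nu>}"

definition depth :: "complex set \<Rightarrow> real" where
  "depth K = (INF \<zeta>\<in>frontier K. local_depth K \<zeta>)"

end

theory Submission
  imports Defs
begin

lemma re_cnj_inner: "Re (a * cnj b) = inner a b"
  by (simp add: inner_complex_def)

lemma dT_attain:
  "\<exists>k::int. dT a b = \<bar>a - b - 2*pi*real_of_int k\<bar> \<and> \<bar>a - b - 2*pi*real_of_int k\<bar> \<le> pi"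
proof -
  define d where "d = a - b"
  define k0 where "k0 = round (d / (2*pi))"
  have r: "\<bar>d/(2*pi) - real_of_int k0\<bar> \<le> 1/2"
    unfolding k0_def using of_int_round_abs_le by (simp add: abs_minus_commute)
  have e: "\<bar>d - 2*pi*real_of_int k\<bar> = 2*pi*\<bar>d/(2*pi) - real_of_int k\<bar>" for k :: int
  proof -
    have "d - 2*pi*real_of_int k = 2*pi*(d/(2*pi) - real_of_int k)" by (simp add: field_simps)
    then show ?thesis by (simp add: abs_mult)
  qed
  have le: "\<bar>d - 2*pi*real_of_int k0\<bar> \<le> \<bar>d - 2*pi*real_of_int k\<bar>" for k :: int
  proof (cases "k = k0")
    case False
    then have "1 \<le> \<bar>k - k0\<bar>" by simp
    then have "1 \<le> \<bar>real_of_int k - real_of_int k0\<bar>"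
      by (metis of_int_1_le_iff of_int_abs of_int_diff)
    then have "\<bar>d/(2*pi) - real_of_int k0\<bar> \<le> \<bar>d/(2*pi) - real_of_int k\<bar>" using r by linarith
    then show ?thesis unfolding e by (simp add: mult_left_mono)
  qed simp
  have "dT a b = \<bar>d - 2*pi*real_of_int k0\<bar>"
    unfolding dT_def d_def[symmetric]
    by (rule antisym, rule cINF_lower, auto intro!: cINF_greatest le)
  moreover have "\<bar>d - 2*pi*real_of_int k0\<bar> \<le> pi" using r unfolding e
    using r unfolding e by (simp add: mult_le_cancel_left)
  ultimately show ?thesis unfolding d_def by blast
qed

lemma dT_cos: "cos (dT a b) = cos (a - b)" and dT_range: "0 \<le> dT a b \<and> dT a b \<le> pi"
proof -
  obtain k::int where k: "dT a b = \<bar>a - b - 2*pi*real_of_int k\<bar>" "\<bar>a - b - 2*pi*real_of_int k\<bar> \<le> pi"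
    using dT_attain by blast
  have "cos (dT a b) = cos (a - b - 2*pi*real_of_int k)" unfolding k(1) by simp
  also have "\<dots> = cos (a - b)"
    by (simp add: cos_diff)
  finally show "cos (dT a b) = cos (a - b)" .
  show "0 \<le> dT a b \<and> dT a b \<le> pi" using k by simp
qed

lemma unit_inner_cos:
  assumes "norm \<nu> = 1" "norm \<mu> = 1"
  shows "inner \<nu> \<mu> = cos (Arg \<nu> - Arg \<mu>)"
proof -
  have n0: "\<nu> \<noteq> 0" "\<mu> \<noteq> 0" using assms by auto
  have "\<nu> = cis (Arg \<nu>)" "\<mu> = cis (Arg \<mu>)"
    using cis_Arg[OF n0(1)] cis_Arg[OF n0(2)] assms by (simp_all add: sgn_div_norm)
  then show ?thesis
    by (metis cos_diff cos_of_real cis.sel inner_complex_def)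
qed

lemma dT_le_half_pi_iff:
  assumes "norm \<nu> = 1" "norm \<mu> = 1"
  shows "dT (Arg \<nu>) (Arg \<mu>) \<le> pi/2 \<longleftrightarrow> inner \<nu> \<mu> \<ge> 0"
proof -
  let ?x = "dT (Arg \<nu>) (Arg \<mu>)"
  have r: "0 \<le> ?x" "?x \<le> pi" using dT_range by auto
  have c: "inner \<nu> \<mu> = cos ?x" using unit_inner_cos[OF assms] dT_cos by simp
  show ?thesis
  proof
    assume "?x \<le> pi/2" then show "inner \<nu> \<mu> \<ge> 0" unfolding c using r by (intro cos_ge_zero) auto
  next
    assume h: "inner \<nu> \<mu> \<ge> 0"
    show "?x \<le> pi/2"
    proof (rule ccontr)
      assume "\<not> ?x \<le> pi/2"
      then have "cos ?x < cos (pi/2)" using r by (intro cos_monotone_0_pi) auto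
      then show False using h c by simp
    qed
  qed
qed

lemma outer_normal_iff:
  "outer_normal K z \<nu> \<longleftrightarrow> z \<in> frontier K \<and> norm \<nu> = 1 \<and> (\<forall>u\<in>K. inner (u - z) \<nu> \<le> 0)"
  unfolding outer_normal_def re_cnj_inner by simp

context
  fixes K :: "complex set"
  assumes cd: "convex_domain K"
begin

lemma cK: "compact K" "convex K" "closed K" "bounded K" "K \<noteq> {}" "interior K \<noteq> {}"
  using cd unfolding convex_domain_def by (auto simp: compact_imp_closed compact_imp_bounded)

lemma frontier_sub: "frontier K \<subseteq> K"
  using cK(3) by (simp add: frontier_subset_closed)

lemma frontier_ne: "frontier K \<noteq> {}"
proof -
  have "K \<noteq> UNIV" using cK(4) not_bounded_UNIV by auto
  then show ?thesis using frontier_not_empty cK(5) by blast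
qed

lemma normal_exists:
  assumes "z \<in> frontier K"
  shows "\<exists>\<nu>. outer_normal K z \<nu>"
proof -
  have ri: "rel_interior K = interior K" using cK(6) rel_interior_nonempty_interior by blast
  have zc: "z \<in> closure K" "z \<notin> rel_interior K" using assms unfolding ri frontier_def
    by blast+
  obtain a where a: "a \<noteq> 0" "\<And>y. y \<in> closure K \<Longrightarrow> a \<bullet> z \<le> a \<bullet> y"
    using supporting_hyperplane_relative_frontier[OF cK(2) zc] by metis
  define \<nu> where "\<nu> = - ((1/norm a) *\<^sub>R a)"
  have "norm \<nu> = 1" using a(1) by (simp add: \<nu>_def)
  moreover have "inner (u - z) \<nu> \<le> 0" if "u \<in> K" for u
  proof -
    have "a \<bullet> z \<le> a \<bullet> u" using a(2) that closure_subset by blast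
    then have "0 \<le> inner (u - z) a" by (simp add: inner_diff_right inner_commute)
    then show ?thesis using a(1) by (simp add: \<nu>_def inner_minus_right)
  qed
  ultimately show ?thesis using assms unfolding outer_normal_iff by blast
qed

lemma Kbound: "\<exists>M. \<forall>x\<in>K. norm x \<le> M"
  using cK(4) bounded_iff by blast

definition "chordset \<zeta> \<nu> = {h. h \<ge> 0 \<and> \<zeta> - complex_of_real h * \<nu> \<in> K}"

lemma chord_bound:
  assumes "norm \<nu> = 1" "\<zeta> \<in> K"
  shows "\<exists>B. \<forall>h\<in>chordset \<zeta> \<nu>. h \<le> B"
proof -
  obtain M where M: "\<forall>x\<in>K. norm x \<le> M" using Kbound by blast
  have "h \<le> 2*M" if "h \<in> chordset \<zeta> \<nu>" for h
  proof -
    have h: "h \<ge> 0" "\<zeta> - complex_of_real h * \<nu> \<in> K" using that by (auto simp: chordset_def)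
    have "h = norm (\<zeta> - (\<zeta> - complex_of_real h * \<nu>))" using h(1) assms(1) by (simp add: norm_mult)
    also have "\<dots> \<le> norm \<zeta> + norm (\<zeta> - complex_of_real h * \<nu>)" by (rule norm_triangle_ineq4)
    also have "\<dots> \<le> 2*M" using M[rule_format, OF h(2)] M[rule_format, OF assms(2)] by linarith
    finally show ?thesis .
  qed
  then show ?thesis by blast
qed

lemma chord_props:
  assumes "norm \<nu> = 1" "\<zeta> \<in> K"
  shows "0 \<le> normal_depth K \<zeta> \<nu>"
    and "\<zeta> - complex_of_real (normal_depth K \<zeta> \<nu>) * \<nu> \<in> K"
    and "\<And>h. h \<ge> 0 \<Longrightarrow> \<zeta> - complex_of_real h * \<nu> \<in> K \<Longrightarrow> h \<le> normal_depth K \<zeta> \<nu>"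
    and "\<And>B. (\<And>h. h \<ge> 0 \<Longrightarrow> \<zeta> - complex_of_real h * \<nu> \<in> K \<Longrightarrow> h \<le> B) \<Longrightarrow> normal_depth K \<zeta> \<nu> \<le> B"
proof -
  have nd: "normal_depth K \<zeta> \<nu> = Sup (chordset \<zeta> \<nu>)"
    unfolding normal_depth_def chordset_def by simp
  have ne: "0 \<in> chordset \<zeta> \<nu>" using assms by (simp add: chordset_def)
  have bdd: "bdd_above (chordset \<zeta> \<nu>)" using chord_bound[OF assms] by (auto simp: bdd_above_def)
  have cl: "closed (chordset \<zeta> \<nu>)"
  proof -
    have "chordset \<zeta> \<nu> = {h. h \<ge> 0} \<inter> (\<lambda>h. \<zeta> - complex_of_real h * \<nu>) -` K"
      by (auto simp: chordset_def)
    moreover have "closed ((\<lambda>h. \<zeta> - complex_of_real h * \<nu>) -` K)"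
      by (intro closed_vimage cK(3)) (intro continuous_intros)
    ultimately show ?thesis by (simp add: closed_Int closed_Collect_le)
  qed
  have mem: "Sup (chordset \<zeta> \<nu>) \<in> chordset \<zeta> \<nu>"
    using closed_contains_Sup[OF _ bdd cl] ne by blast
  show "0 \<le> normal_depth K \<zeta> \<nu>" using mem nd by (simp add: chordset_def)
  show "\<zeta> - complex_of_real (normal_depth K \<zeta> \<nu>) * \<nu> \<in> K" using mem nd by (simp add: chordset_def)
  show "\<And>h. h \<ge> 0 \<Longrightarrow> \<zeta> - complex_of_real h * \<nu> \<in> K \<Longrightarrow> h \<le> normal_depth K \<zeta> \<nu>"
    unfolding nd by (rule cSup_upper[OF _ bdd]) (simp add: chordset_def)
  show "\<And>B. (\<And>h. h \<ge> 0 \<Longrightarrow> \<zeta> - complex_of_real h * \<nu> \<in> K \<Longrightarrow> h \<le> B) \<Longrightarrow> normal_depth K \<zeta> \<nu> \<le> B"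
    unfolding nd by (rule cSup_least) (use ne in \<open>auto simp: chordset_def\<close>)
qed

lemma nd_bound: "\<exists>B. \<forall>\<zeta> \<nu>. outer_normal K \<zeta> \<nu> \<longrightarrow> normal_depth K \<zeta> \<nu> \<le> B"
proof -
  obtain M where M: "\<forall>x\<in>K. norm x \<le> M" using Kbound by blast
  have "normal_depth K \<zeta> \<nu> \<le> 2*M" if "outer_normal K \<zeta> \<nu>" for \<zeta> \<nu>
  proof -
    have a: "norm \<nu> = 1" "\<zeta> \<in> K" using that frontier_sub by (auto simp: outer_normal_iff)
    show ?thesis
    proof (rule chord_props(4)[OF a])
      fix h :: real assume h: "h \<ge> 0" "\<zeta> - complex_of_real h * \<nu> \<in> K"
      have "h = norm (\<zeta> - (\<zeta> - complex_of_real h * \<nu>))" using h(1) a(1) by (simp add: norm_mult)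
      also have "\<dots> \<le> norm \<zeta> + norm (\<zeta> - complex_of_real h * \<nu>)" by (rule norm_triangle_ineq4)
      also have "\<dots> \<le> 2*M" using M[rule_format, OF h(2)] M[rule_format, OF a(2)] by linarith
      finally show "h \<le> 2*M" .
    qed
  qed
  then show ?thesis by blast
qed

lemma ld_ge: "outer_normal K \<zeta> \<nu> \<Longrightarrow> normal_depth K \<zeta> \<nu> \<le> local_depth K \<zeta>"
  unfolding local_depth_def
  by (rule cSup_upper) (use nd_bound in \<open>auto simp: bdd_above_def\<close>)

lemma ld_le:
  assumes "\<zeta> \<in> frontier K" "\<And>\<nu>. outer_normal K \<zeta> \<nu> \<Longrightarrow> normal_depth K \<zeta> \<nu> \<le> B"
  shows "local_depth K \<zeta> \<le> B"
  unfolding local_depth_def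
  by (rule cSup_least) (use normal_exists[OF assms(1)] assms(2) in auto)

lemma ld_ge0: "\<zeta> \<in> frontier K \<Longrightarrow> 0 \<le> local_depth K \<zeta>"
proof -
  assume z: "\<zeta> \<in> frontier K"
  obtain \<nu> where n: "outer_normal K \<zeta> \<nu>" using normal_exists[OF z] by blast
  have "0 \<le> normal_depth K \<zeta> \<nu>" using n frontier_sub by (intro chord_props(1)) (auto simp: outer_normal_iff)
  then show ?thesis using ld_ge[OF n] by linarith
qed

lemma depth_ge: "(\<And>\<zeta>. \<zeta> \<in> frontier K \<Longrightarrow> r \<le> local_depth K \<zeta>) \<Longrightarrow> r \<le> depth K"
  unfolding depth_def by (rule cINF_greatest) (use frontier_ne in auto)

lemma depth_le: "\<zeta> \<in> frontier K \<Longrightarrow> depth K \<le> local_depth K \<zeta>"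
  unfolding depth_def by (rule cINF_lower) (use ld_ge0 in \<open>auto simp: bdd_below_def\<close>)

lemma depth_ge0: "0 \<le> depth K"
  using depth_ge ld_ge0 by blast

end

context
  fixes K :: "complex set"
  assumes cd: "convex_domain K"
begin

lemma proj_normal:
  assumes "a \<notin> K"
  shows "closest_point K a \<in> K"
    and "\<And>x. x \<in> K \<Longrightarrow> dist a (closest_point K a) \<le> dist a x"
    and "a \<noteq> closest_point K a"
    and "outer_normal K (closest_point K a) ((1/norm (a - closest_point K a)) *\<^sub>R (a - closest_point K a))"
proof -
  let ?q = "closest_point K a"
  show q: "?q \<in> K" using closest_point_in_set cK[OF cd] by blast
  show "\<And>x. x \<in> K \<Longrightarrow> dist a ?q \<le> dist a x" using closest_point_le cK[OF cd] by blast
  show ne: "a \<noteq> ?q" using q assms by auto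
  have ah: "affine hull K = UNIV" using affine_hull_nonempty_interior cK[OF cd] by blast
  have ri: "rel_interior K = interior K" using cK[OF cd] rel_interior_nonempty_interior by blast
  have "?q \<notin> interior K"
    using closest_point_in_rel_interior[of K a] cK[OF cd] ah ri assms interior_subset by blast
  then have qf: "?q \<in> frontier K" using q cK(3)[OF cd] by (simp add: frontier_def)
  have nq: "norm (a - ?q) > 0" using ne by simp
  have "inner (u - ?q) ((1/norm (a - ?q)) *\<^sub>R (a - ?q)) \<le> 0" if "u \<in> K" for u
  proof -
    have "inner (a - ?q) (u - ?q) \<le> 0" using closest_point_dot cK[OF cd] that by blast
    then show ?thesis using nq by (simp add: inner_commute divide_nonpos_pos)
  qed
  moreover have "norm ((1/norm (a - ?q)) *\<^sub>R (a - ?q)) = 1" using nq by simp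
  ultimately show "outer_normal K ?q ((1/norm (a - ?q)) *\<^sub>R (a - ?q))"
    using qf unfolding outer_normal_iff by blast
qed

definition "PP t \<longleftrightarrow> (\<forall>z z' \<nu> \<mu>. outer_normal K z \<nu> \<longrightarrow> outer_normal K z' \<mu> \<longrightarrow> dist z z' \<le> t \<longrightarrow> 0 \<le> inner \<nu> \<mu>)"

definition "Om t = {dT (Arg \<nu>) (Arg \<mu>) | \<nu> \<mu> z z'.
       outer_normal K z \<nu> \<and> outer_normal K z' \<mu> \<and> dist z z' \<le> t}"

lemma omegaK_Om: "omegaK K t = Sup (Om t)"
  unfolding omegaK_def Om_def by simp

lemma Om_bdd: "bdd_above (Om t)"
  unfolding Om_def bdd_above_def using dT_range by blast

lemma Om_ne: "0 \<le> t \<Longrightarrow> Om t \<noteq> {}"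
proof -
  assume t: "0 \<le> t"
  obtain z where z: "z \<in> frontier K" using frontier_ne[OF cd] by blast
  obtain \<nu> where "outer_normal K z \<nu>" using normal_exists[OF cd z] by blast
  then show ?thesis unfolding Om_def using t by fastforce
qed

lemma omega_le_iff: "0 \<le> t \<Longrightarrow> omegaK K t \<le> pi/2 \<longleftrightarrow> PP t"
proof -
  assume t: "0 \<le> t"
  have "omegaK K t \<le> pi/2 \<longleftrightarrow> (\<forall>x\<in>Om t. x \<le> pi/2)"
    unfolding omegaK_Om by (rule cSup_le_iff[OF Om_ne[OF t] Om_bdd])
  also have "\<dots> \<longleftrightarrow> PP t"
    unfolding Om_def PP_def
    using dT_le_half_pi_iff by (auto simp: outer_normal_iff) blast+
  finally show ?thesis .
qed

lemma omega_mono: "0 \<le> r \<Longrightarrow> r \<le> r' \<Longrightarrow> omegaK K r \<le> omegaK K r'"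
  unfolding omegaK_Om
  apply (rule cSup_subset_mono[OF Om_ne Om_bdd])
    apply simp
  apply (simp add: Om_def)
  by (smt (verit) Collect_mono_iff)

lemma omega_le_pi: "0 \<le> t \<Longrightarrow> omegaK K t \<le> pi"
  unfolding omegaK_Om
  by (rule cSup_least[OF Om_ne]) (auto simp: Om_def dT_range)

lemma PP_depth:
  assumes P: "PP r"
  shows "r \<le> depth K"
proof (rule depth_ge[OF cd])
  fix \<zeta> assume z: "\<zeta> \<in> frontier K"
  obtain \<nu> where n: "outer_normal K \<zeta> \<nu>" using normal_exists[OF cd z] by blast
  have n1: "norm \<nu> = 1" and zK: "\<zeta> \<in> K" using n frontier_sub[OF cd] by (auto simp: outer_normal_iff)
  have nK: "\<forall>u\<in>K. inner (u - \<zeta>) \<nu> \<le> 0" using n by (simp add: outer_normal_iff)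
  define h where "h = normal_depth K \<zeta> \<nu>"
  have "r \<le> h"
  proof (rule ccontr)
    assume "\<not> r \<le> h"
    then have hr: "h < r" by simp
    define e where "e = (r - h)/2"
    have e: "e > 0" "h + 2*e = r" using hr by (auto simp: e_def field_simps)
    have h0: "0 \<le> h" using chord_props(1)[OF cd n1 zK] by (simp add: h_def)
    define a where "a = \<zeta> - complex_of_real (h + e) * \<nu>"
    have aK: "a \<notin> K"
    proof
      assume "a \<in> K"
      then have "h + e \<le> normal_depth K \<zeta> \<nu>"
        using chord_props(3)[OF cd n1 zK, of "h+e"] h0 e by (simp add: a_def)
      then have "h + e \<le> h" by (simp add: h_def)
      then show False using e by simp
    qed
    define z' where "z' = \<zeta> - complex_of_real h * \<nu>"
    have z'K: "z' \<in> K" using chord_props(2)[OF cd n1 zK] by (simp add: z'_def h_def)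
    define q where "q = closest_point K a"
    define m where "m = (1/norm (a - q)) *\<^sub>R (a - q)"
    have qK: "q \<in> K" and qd: "dist a q \<le> dist a z'" and aq: "a \<noteq> q"
      and qn: "outer_normal K q m"
      using proj_normal[OF aK] z'K by (auto simp: q_def m_def)
    have "dist a z' = e" using n1 e by (simp add: a_def z'_def dist_norm algebra_simps norm_mult)
    then have daq: "dist a q \<le> e" using qd by simp
    have "\<zeta> - a = complex_of_real (h + e) * \<nu>" by (simp add: a_def)
    then have "dist \<zeta> a = norm (complex_of_real (h + e)) * norm \<nu>" by (simp add: dist_norm norm_mult)
    also have "\<dots> = h + e" using n1 e h0 by (simp only: norm_of_real) simp
    finally have "dist \<zeta> a = h + e" .
    then have "dist \<zeta> q \<le> r" using daq e dist_triangle[of \<zeta> q a] by (simp add: dist_commute)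
    then have "0 \<le> inner \<nu> m" using P n qn unfolding PP_def by blast
    moreover have "inner \<nu> m < 0"
    proof -
      have "inner (a - q) (\<zeta> - q) \<le> 0" using closest_point_dot cK[OF cd] zK by (simp add: q_def)
      moreover have "inner (a - q) (a - q) > 0" using aq by simp
      moreover have "a - \<zeta> = (a - q) - (\<zeta> - q)" by simp
      ultimately have "inner (a - q) (a - \<zeta>) > 0" by (simp only: inner_diff_right)
      moreover have "a - \<zeta> = - ((h + e) *\<^sub>R \<nu>)" unfolding a_def scaleR_conv_of_real by simp
      ultimately have "(h + e) * inner (a - q) \<nu> < 0" by (simp add: inner_minus_right)
      then have "inner (a - q) \<nu> < 0" using e h0 by (simp add: mult_less_0_iff)
      moreover have "norm (a - q) > 0" using aq by simp
      ultimately show ?thesis by (simp add: m_def inner_commute divide_neg_pos)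
    qed
    ultimately show False by simp
  qed
  then show "r \<le> local_depth K \<zeta>" using ld_ge[OF cd n] by (simp add: h_def)
qed

end

context
  fixes K :: "complex set"
  assumes cd: "convex_domain K"
begin

lemma min_width_pos: "min_width K > 0"
proof -
  obtain c where c: "c \<in> interior K" using cK(6)[OF cd] by blast
  obtain r where r: "r > 0" "ball c r \<subseteq> K" using c open_interior
    by (meson interior_subset open_contains_ball_eq subset_trans)
  obtain M where M: "\<forall>x\<in>K. norm x \<le> M" using Kbound[OF cd] by blast
  have dw: "r \<le> dir_width K \<gamma>" for \<gamma>
  proof -
    let ?f = "\<lambda>z. Re (z * cis \<gamma>)"
    have fb: "\<bar>?f z\<bar> \<le> norm z" for z
    proof -
      have "\<bar>?f z\<bar> \<le> norm (z * cis \<gamma>)" by (rule abs_Re_le_cmod)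
      also have "\<dots> = norm z" by (simp add: norm_mult)
      finally show ?thesis .
    qed
    have fb1: "?f z \<le> M" "-M \<le> ?f z" if "z \<in> K" for z
      using fb[of z] M that by (auto simp: abs_le_iff)
    have ba: "bdd_above (?f ` K)" by (rule bdd_aboveI2) (use fb1 in blast)
    have bb: "bdd_below (?f ` K)" by (rule bdd_belowI2) (use fb1 in blast)
    define p1 where "p1 = c + complex_of_real (r/2) * cnj (cis \<gamma>)"
    define p2 where "p2 = c - complex_of_real (r/2) * cnj (cis \<gamma>)"
    have cc: "cnj (cis \<gamma>) * cis \<gamma> = 1" by (simp add: cis_cnj cis_mult)
    have "dist c p1 < r" "dist c p2 < r" using r(1) by (simp_all add: p1_def p2_def dist_norm norm_mult)
    then have p: "p1 \<in> K" "p2 \<in> K" using r(2) by auto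
    have f1: "?f p1 = ?f c + r/2"
      unfolding p1_def distrib_right mult.assoc cc by simp
    have f2: "?f p2 = ?f c - r/2"
      unfolding p2_def left_diff_distrib mult.assoc cc by simp
    have "?f p1 \<le> (SUP z\<in>K. ?f z)" by (rule cSUP_upper[OF p(1) ba])
    moreover have "(INF z\<in>K. ?f z) \<le> ?f p2" by (rule cINF_lower[OF bb p(2)])
    ultimately show ?thesis unfolding dir_width_def using f1 f2 by linarith
  qed
  have "r \<le> min_width K" unfolding min_width_def by (rule cINF_greatest) (use dw in auto)
  then show ?thesis using r by simp
qed

lemma omega_minus_ge:
  assumes s: "s > 0" and "0 \<le> r" "r < s"
  shows "omegaK K r \<le> omega_minus K s"
proof -
  let ?L = "Sup (omegaK K ` {0..<s})"
  have ne: "{0..<s} \<noteq> {}" using s by auto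
  have bdd: "bdd_above (omegaK K ` {0..<s})"
    by (rule bdd_aboveI2[of _ _ pi]) (use omega_le_pi[OF cd] in auto)
  have lim: "(omegaK K \<longlongrightarrow> ?L) (at_left s)"
  proof (rule order_tendstoI)
    fix a assume a: "a < ?L"
    then obtain r0 where r0: "r0 \<in> {0..<s}" "a < omegaK K r0"
      using less_cSUP_iff[OF ne bdd] by blast
    have "eventually (\<lambda>x. x \<in> {r0<..<s}) (at_left s)"
      using r0 by (intro eventually_at_left_real) auto
    then show "eventually (\<lambda>x. a < omegaK K x) (at_left s)"
    proof (rule eventually_mono)
      fix x assume "x \<in> {r0<..<s}"
      then have "omegaK K r0 \<le> omegaK K x" using r0 by (intro omega_mono[OF cd]) auto
      then show "a < omegaK K x" using r0 by simp
    qed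
  next
    fix a assume a: "?L < a"
    have "eventually (\<lambda>x. x \<in> {0<..<s}) (at_left s)"
      using s by (intro eventually_at_left_real) auto
    then show "eventually (\<lambda>x. omegaK K x < a) (at_left s)"
    proof (rule eventually_mono)
      fix x assume "x \<in> {0<..<s}"
      then have "omegaK K x \<le> ?L" by (intro cSUP_upper[OF _ bdd]) auto
      then show "omegaK K x < a" using a by simp
    qed
  qed
  have "omega_minus K s = ?L"
    unfolding omega_minus_def using s lim by (simp add: tendsto_Lim)
  moreover have "omegaK K r \<le> ?L" using assms by (intro cSUP_upper[OF _ bdd]) auto
  ultimately show ?thesis by simp
qed

end

lemma parseval:
  fixes a b v w :: complex
  assumes "norm a = 1" "norm b = 1" "inner a b = 0"
  shows "inner v w = inner v a * inner w a + inner v b * inner w b"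
proof -
  obtain a1 a2 b1 b2 v1 v2 w1 w2 where
    d: "a = Complex a1 a2" "b = Complex b1 b2" "v = Complex v1 v2" "w = Complex w1 w2"
    by (metis complex.exhaust)
  have h1: "a1^2 + a2^2 = 1" "b1^2 + b2^2 = 1" "a1*b1 + a2*b2 = 0"
    using assms unfolding d by (auto simp: inner_complex_def cmod_def power2_eq_square)
  define dd where "dd = a1*b2 - a2*b1"
  have "b1 = b1*(a1^2+a2^2)" using h1 by simp
  also have "\<dots> = - dd * a2 + a1*(a1*b1 + a2*b2)" by (simp add: dd_def algebra_simps power2_eq_square)
  finally have e1: "b1 = - dd * a2" using h1 by simp
  have "b2 = b2*(a1^2+a2^2)" using h1 by simp
  also have "\<dots> = dd * a1 + a2*(a1*b1 + a2*b2)" by (simp add: dd_def algebra_simps power2_eq_square)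
  finally have e2: "b2 = dd * a1" using h1 by simp
  have "dd^2 * (a1^2 + a2^2) = b1^2 + b2^2" unfolding e1 e2 by (simp add: algebra_simps power2_eq_square)
  then have dd2: "dd^2 = 1" using h1 by simp
  show ?thesis unfolding d inner_complex_def complex.sel e1 e2
    using dd2 h1(1) by algebra
qed

lemma inner_le_norm1: "norm (b::complex) = 1 \<Longrightarrow> \<bar>inner a b\<bar> \<le> norm a"
  using Cauchy_Schwarz_ineq2[of a b] by simp

context
  fixes K :: "complex set"
  assumes cd: "convex_domain K"
begin

lemma cornerE:
  assumes pK: "p \<in> K"
    and e1: "norm \<nu> = 1" "norm \<mu>0 = 1" "inner \<nu> \<mu>0 = 0"
    and Q: "\<And>u. u \<in> K \<Longrightarrow> inner (u - p) \<nu> \<le> 0 \<and> inner (u - p) \<mu>0 \<le> 0"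
    and z'K: "z' \<in> K" and mu': "norm \<mu>' = 1" "\<And>u. u \<in> K \<Longrightarrow> inner (u - z') \<mu>' \<le> 0"
    and k: "inner \<mu>' \<nu> < 0" "inner \<mu>' \<mu>0 \<ge> 0"
    and eta: "\<eta> > 0"
    and c: "c \<in> interior K" "inner (z' - p) (-\<mu>0) + \<eta> < inner (c - p) (-\<mu>0)"
  shows "depth K \<le> 4 * dist z' p + 2*\<eta> + 2*\<eta> / (- inner \<mu>' \<nu>)"
proof -
  define e1v where "e1v = - \<nu>"
  define e2v where "e2v = - \<mu>0"
  have ON: "norm e1v = 1" "norm e2v = 1" "inner e1v e2v = 0" using e1 by (auto simp: e1v_def e2v_def)
  have PS: "inner v w = inner v e1v * inner w e1v + inner v e2v * inner w e2v" for v w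
    by (rule parseval[OF ON])
  define X where "X u = inner (u - p) e1v" for u
  define Y where "Y u = inner (u - p) e2v" for u
  have XY0: "0 \<le> X u" "0 \<le> Y u" if "u \<in> K" for u
    using Q[OF that] by (auto simp: X_def Y_def e1v_def e2v_def)
  define \<kappa> where "\<kappa> = - inner \<mu>' \<nu>"
  have kp: "\<kappa> > 0" using k by (simp add: \<kappa>_def)
  define Y0 where "Y0 = Y z' + \<eta>"
  have Y0p: "Y0 > 0" using XY0(2)[OF z'K] eta by (simp add: Y0_def)
  have Y0c: "Y0 < Y c" using c(2) by (simp add: Y0_def Y_def e2v_def)
  obtain r where r: "r > 0" "ball c r \<subseteq> K" using c(1) open_interior
    by (meson interior_subset open_contains_ball_eq subset_trans)
  have cinK: "c \<in> K" using c(1) interior_subset by blast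
  define lam where "lam = Y0 / Y c"
  have lam: "0 < lam" "lam < 1" using Y0p Y0c by (auto simp: lam_def field_simps)
  define w where "w s = p + lam *\<^sub>R ((c + s *\<^sub>R e1v) - p)" for s
  have wK: "w s \<in> K" if "\<bar>s\<bar> < r" for s
  proof -
    have "c + s *\<^sub>R e1v \<in> ball c r" using that ON by (simp add: dist_norm)
    then have "c + s *\<^sub>R e1v \<in> K" using r by blast
    then have "(1 - lam) *\<^sub>R p + lam *\<^sub>R (c + s *\<^sub>R e1v) \<in> K"
      using convexD_alt[OF cK(2)[OF cd] pK] lam by simp
    moreover have "(1 - lam) *\<^sub>R p + lam *\<^sub>R (c + s *\<^sub>R e1v) = w s"
      by (simp add: w_def algebra_simps)
    ultimately show ?thesis by simp
  qed
  have wY: "Y (w s) = Y0" for s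
  proof -
    have "Y (w s) = lam * (Y c + s * inner e1v e2v)"
      by (simp add: Y_def w_def inner_diff_left inner_add_left algebra_simps)
    also have "\<dots> = Y0" using ON Y0c Y0p by (simp add: lam_def)
    finally show ?thesis .
  qed
  have ee: "inner e1v e1v = 1" "inner e2v e2v = 1" using ON by (simp_all add: power2_norm_eq_inner[symmetric])
  have wX: "X (w s) = lam * (X c + s)" for s
  proof -
    have "X (w s) = lam * (X c + s * inner e1v e1v)"
      by (simp add: X_def w_def inner_diff_left inner_add_left algebra_simps)
    then show ?thesis using ee by simp
  qed
  define L where "L = K \<inter> {u. Y u = Y0}"
  have Lc: "compact L"
  proof -
    have "closed {u. Y u = Y0}" unfolding Y_def
      by (intro closed_Collect_eq continuous_intros)
    then show ?thesis unfolding L_def using cK(1)[OF cd] by (simp add: compact_Int_closed)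
  qed
  have w0: "w 0 \<in> L" "w (r/2) \<in> L" using wK wY r(1) by (auto simp: L_def)
  have "continuous_on L X" unfolding X_def by (intro continuous_intros)
  then obtain q where q: "q \<in> L" "\<And>u. u \<in> L \<Longrightarrow> X q \<le> X u"
    using continuous_attains_inf[OF Lc _] w0 by blast
  have qK: "q \<in> K" and qY: "Y q = Y0" using q(1) by (auto simp: L_def)
  have Xwr: "X q < X (w (r/2))"
  proof -
    have "X q \<le> X (w 0)" using q(2) w0 by blast
    also have "\<dots> < X (w (r/2))" unfolding wX using lam r(1) by simp
    finally show ?thesis .
  qed
  have Xdiff: "inner (u - v) e1v = X u - X v" "inner (u - v) e2v = Y u - Y v" for u v
  proof -
    have "u - v = (u - p) - (v - p)" by simp
    then show "inner (u - v) e1v = X u - X v" "inner (u - v) e2v = Y u - Y v"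
      unfolding X_def Y_def by (metis inner_diff_left)+
  qed
  have qf: "q \<in> frontier K"
  proof -
    have "q \<notin> interior K"
    proof
      assume "q \<in> interior K"
      then obtain \<epsilon> where \<epsilon>: "\<epsilon> > 0" "ball q \<epsilon> \<subseteq> K"
        by (meson open_contains_ball_eq open_interior interior_subset subset_trans)
      define q' where "q' = q - (\<epsilon>/2) *\<^sub>R e1v"
      have "q' \<in> ball q \<epsilon>" using \<epsilon>(1) ON by (simp add: q'_def dist_norm)
      then have q'K: "q' \<in> K" using \<epsilon>(2) by blast
      have "Y q' - Y q = inner (q' - q) e2v" using Xdiff by simp
      also have "\<dots> = 0" using ON by (simp add: q'_def)
      finally have "Y q' = Y0" using qY by simp
      then have "q' \<in> L" using q'K by (simp add: L_def)
      then have "X q \<le> X q'" using q(2) by blast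
      moreover have "X q' - X q = inner (q' - q) e1v" using Xdiff by simp
      moreover have "inner (q' - q) e1v = - (\<epsilon>/2)" using ee by (simp add: q'_def)
      ultimately show False using \<epsilon>(1) by linarith
    qed
    then show ?thesis using qK cK(3)[OF cd] by (simp add: frontier_def)
  qed
  define B where "B = 4 * dist z' p + 2*\<eta> + 2*\<eta> / (- inner \<mu>' \<nu>)"
  have XYz: "X z' \<le> dist z' p" "Y z' \<le> dist z' p"
    using inner_le_norm1[OF ON(1), of "z' - p"] inner_le_norm1[OF ON(2), of "z' - p"]
    by (auto simp: X_def Y_def dist_norm)
  define \<mu>Y where "\<mu>Y = inner \<mu>' e2v"
  have \<mu>X: "inner \<mu>' e1v = \<kappa>" by (simp add: e1v_def \<kappa>_def inner_minus_right)
  have \<mu>Y: "\<mu>Y \<le> 0" "- \<mu>Y \<le> 1" using k(2) inner_le_norm1[OF ON(2), of \<mu>'] mu'(1)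
    by (auto simp: \<mu>Y_def e2v_def inner_minus_right)
  have "local_depth K q \<le> B"
  proof (rule ld_le[OF cd qf])
    fix m assume mn: "outer_normal K q m"
    have m1: "norm m = 1" and mK: "\<And>u. u \<in> K \<Longrightarrow> inner (u - q) m \<le> 0"
      using mn by (auto simp: outer_normal_iff)
    define mX where "mX = inner m e1v"
    define mY where "mY = inner m e2v"
    have ip: "inner (u - q) m = (X u - X q) * mX + (Y u - Y q) * mY" for u
      using PS[of "u - q" m] Xdiff by (simp add: mX_def mY_def)
    have mX: "mX \<le> 0"
    proof -
      have "inner (w (r/2) - q) m \<le> 0" using mK w0 by (auto simp: L_def)
      then have "(X (w (r/2)) - X q) * mX \<le> 0" using ip w0 qY by (simp add: L_def)
      then show ?thesis using Xwr by (simp add: mult_le_0_iff)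
    qed
    have mY: "mY \<ge> 0"
    proof -
      have "inner (p - q) m \<le> 0" using mK pK by blast
      moreover have "X p = 0" "Y p = 0" by (simp_all add: X_def Y_def)
      ultimately have "- X q * mX - Y0 * mY \<le> 0" using ip[of p] qY by simp
      moreover have "0 \<le> - X q * mX" using XY0(1)[OF qK] mX by (simp add: mult_nonneg_nonpos)
      ultimately have "0 \<le> Y0 * mY" by linarith
      then show ?thesis using Y0p by (simp add: zero_le_mult_iff)
    qed
    have msq: "mX^2 + mY^2 = 1"
      using PS[of m m] m1 by (simp add: mX_def mY_def power2_norm_eq_inner[symmetric] power2_eq_square)
    have mmu: "inner m \<mu>' = mX * \<kappa> + mY * \<mu>Y"
      using PS[of m \<mu>'] \<mu>X by (simp add: mX_def mY_def \<mu>Y_def)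
    have qz: "inner (q - z') \<mu>' = (X q - X z') * \<kappa> + \<eta> * \<mu>Y"
    proof -
      have "inner (q - z') \<mu>' = inner (q - z') e1v * inner \<mu>' e1v + inner (q - z') e2v * inner \<mu>' e2v"
        by (rule PS)
      also have "\<dots> = (X q - X z') * \<kappa> + (Y q - Y z') * \<mu>Y" unfolding Xdiff \<mu>X \<mu>Y_def ..
      finally show ?thesis using qY by (simp add: Y0_def)
    qed
    show "normal_depth K q m \<le> B"
    proof (rule chord_props(4)[OF cd m1 qK])
      fix h :: real assume h: "h \<ge> 0" "q - complex_of_real h * m \<in> K"
      define u where "u = q - complex_of_real h * m"
      have uq: "u - q = - (h *\<^sub>R m)" by (simp add: u_def scaleR_conv_of_real)
      have uY: "Y u = Y0 - h * mY"
      proof -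
        have "Y u - Y q = inner (u - q) e2v" using Xdiff by simp
        also have "\<dots> = - h * mY" unfolding uq by (simp add: mY_def inner_minus_left)
        finally show ?thesis using qY by simp
      qed
      have hY: "h * mY \<le> Y0" using XY0(2)[of u] h(2) uY by (simp add: u_def)
      have uz: "u - z' = (q - z') - h *\<^sub>R m" by (simp add: u_def scaleR_conv_of_real)
      have "inner (u - z') \<mu>' \<le> 0" using mu'(2) h(2) by (simp add: u_def)
      then have "inner (q - z') \<mu>' - h * inner m \<mu>' \<le> 0" unfolding uz by (simp add: inner_diff_left)
      then have main: "(X q - X z') * \<kappa> + \<eta> * \<mu>Y - h * (mX * \<kappa> + mY * \<mu>Y) \<le> 0"
        unfolding qz mmu .
      have t1: "0 \<le> X q * \<kappa>" using XY0(1)[OF qK] kp by simp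
      have "\<eta> * (- \<mu>Y) \<le> \<eta> * 1" using \<mu>Y eta by (intro mult_left_mono) auto
      then have t2: "- (\<eta> * \<mu>Y) \<le> \<eta>" by simp
      have t3: "h * (mY * \<mu>Y) \<le> 0" using h(1) mY \<mu>Y(1) by (simp add: mult_nonneg_nonpos mult_nonneg_nonneg)
      have key: "h * (- mX) * \<kappa> \<le> X z' * \<kappa> + \<eta>"
        using main t1 t2 t3 by (simp add: algebra_simps)
      show "h \<le> B"
      proof (cases "mY \<ge> 1/2")
        case True
        then have "h * (1/2) \<le> h * mY" using h(1) by (intro mult_left_mono) auto
        then have "h \<le> 2 * Y0" using hY by simp
        then have "h \<le> 2 * dist z' p + 2*\<eta>" using XYz by (simp add: Y0_def)
        moreover have "0 \<le> 2*\<eta> / \<kappa>" using eta kp by simp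
        moreover have "0 \<le> dist z' p" by simp
        ultimately show ?thesis unfolding B_def \<kappa>_def[symmetric] by linarith
      next
        case False
        then have "mY^2 < (1/2)^2" using mY by (intro power_strict_mono) auto
        then have "mY^2 < 1/4" by (simp add: power2_eq_square)
        then have "mX^2 > 3/4" using msq by simp
        have "- mX > 1/2"
        proof (rule ccontr)
          assume "\<not> - mX > 1/2"
          then have "(- mX)^2 \<le> (1/2)^2" using mX by (intro power_mono) auto
          then show False using \<open>mX^2 > 3/4\<close> by (simp add: power2_eq_square)
        qed
        then have "h * (1/2) * \<kappa> \<le> h * (- mX) * \<kappa>" using h(1) kp
          by (intro mult_right_mono mult_left_mono) auto
        then have "h * \<kappa> \<le> 2 * (X z' * \<kappa> + \<eta>)" using key by simp
        then have "h \<le> 2 * X z' + 2 * \<eta> / \<kappa>" using kp by (simp add: field_simps)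
        then have "h \<le> 2 * dist z' p + 2*\<eta>/\<kappa>" using XYz by simp
        moreover have "0 \<le> \<eta>" using eta by simp
        moreover have "0 \<le> dist z' p" by simp
        ultimately show ?thesis unfolding B_def \<kappa>_def[symmetric] by linarith
      qed
    qed
  qed
  then show ?thesis using depth_le[OF cd qf] by (simp add: B_def)
qed

end

context
  fixes K :: "complex set"
  assumes cd: "convex_domain K"
begin

lemma interior_strict:
  assumes c: "c \<in> interior K" and e: "norm e = 1" and Q: "\<And>u. u \<in> K \<Longrightarrow> inner (u - p) e \<le> 0"
  shows "inner (c - p) (-e) > 0"
proof -
  obtain r where r: "r > 0" "ball c r \<subseteq> K" using c open_interior
    by (meson interior_subset open_contains_ball_eq subset_trans)
  have "c + (r/2) *\<^sub>R e \<in> ball c r" using r(1) e by (simp add: dist_norm)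
  then have "inner (c + (r/2) *\<^sub>R e - p) e \<le> 0" using Q r(2) by blast
  moreover have "inner (c + (r/2) *\<^sub>R e - p) e = inner (c - p) e + r/2"
  proof -
    have ee: "inner e e = 1" using e by (simp add: power2_norm_eq_inner[symmetric])
    show ?thesis by (simp add: inner_diff_left inner_add_left ee)
  qed
  ultimately show ?thesis using r(1) by (simp add: inner_minus_right)
qed

lemma frame:
  assumes n: "outer_normal K p \<nu>" "outer_normal K p \<mu>" and a: "inner \<nu> \<mu> \<le> 0"
  obtains \<mu>0 where "norm \<mu>0 = 1" "inner \<nu> \<mu>0 = 0" "inner \<mu> \<mu>0 > 0"
    "\<And>u. u \<in> K \<Longrightarrow> inner (u - p) \<mu>0 \<le> 0"
proof -
  have n1: "norm \<nu> = 1" "norm \<mu> = 1" and Qn: "\<And>u. u \<in> K \<Longrightarrow> inner (u - p) \<nu> \<le> 0"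
    and Qm: "\<And>u. u \<in> K \<Longrightarrow> inner (u - p) \<mu> \<le> 0" using n by (auto simp: outer_normal_iff)
  define j where "j = \<i> * \<nu>"
  have j1: "norm j = 1" using n1 by (simp add: j_def norm_mult)
  have j2: "inner \<nu> j = 0" by (simp add: j_def inner_complex_def)
  note j = j1 j2
  define \<mu>0 where "\<mu>0 = (if inner \<mu> j \<ge> 0 then j else - j)"
  have m0: "norm \<mu>0 = 1" "inner \<nu> \<mu>0 = 0" "inner \<mu> \<mu>0 \<ge> 0" using j by (auto simp: \<mu>0_def)
  have PS: "inner v w = inner v \<nu> * inner w \<nu> + inner v \<mu>0 * inner w \<mu>0" for v w
    by (rule parseval[OF n1(1) m0(1) m0(2)])
  define aa where "aa = inner \<mu> \<nu>"
  define bb where "bb = inner \<mu> \<mu>0"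
  have aa: "aa \<le> 0" using a by (simp add: aa_def inner_commute)
  have sq: "aa * aa + bb * bb = 1"
    using PS[of \<mu> \<mu>] n1(2) by (simp add: aa_def bb_def power2_norm_eq_inner[symmetric])
  obtain c where c: "c \<in> interior K" using cK(6)[OF cd] by blast
  have bb: "bb > 0"
  proof (rule ccontr)
    assume "\<not> bb > 0"
    then have "bb = 0" using m0(3) by (simp add: bb_def)
    then have "aa * aa = 1" using sq by simp
    then have "aa = -1" using aa square_eq_1_iff[of aa] by auto
    have ip: "inner (\<mu> + \<nu>) (\<mu> + \<nu>) = inner \<mu> \<mu> + 2 * inner \<mu> \<nu> + inner \<nu> \<nu>"
      by (simp add: inner_add_left inner_add_right inner_commute)
    have "inner \<mu> \<mu> = 1" "inner \<nu> \<nu> = 1" using n1 by (simp_all add: power2_norm_eq_inner[symmetric])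
    then have "inner (\<mu> + \<nu>) (\<mu> + \<nu>) = 0" using ip \<open>aa = -1\<close> by (simp add: aa_def)
    then have "\<mu> + \<nu> = 0" by (simp only: inner_eq_zero_iff)
    then have "\<mu> = - \<nu>" by (simp add: add_eq_0_iff2)
    then have "inner (c - p) (-\<mu>) > 0" "inner (c - p) (-\<nu>) > 0"
      using interior_strict[OF c n1(2) Qm] interior_strict[OF c n1(1) Qn] by auto
    then show False using \<open>\<mu> = - \<nu>\<close> by (simp add: inner_minus_right)
  qed
  have Q0: "inner (u - p) \<mu>0 \<le> 0" if u: "u \<in> K" for u
  proof -
    have "inner (u - p) \<mu> = inner (u - p) \<nu> * aa + inner (u - p) \<mu>0 * bb"
      using PS[of "u - p" \<mu>] by (simp add: aa_def bb_def)
    moreover have "0 \<le> inner (u - p) \<nu> * aa" using Qn[OF u] aa by (simp add: mult_nonpos_nonpos)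
    ultimately have "inner (u - p) \<mu>0 * bb \<le> 0" using Qm[OF u] by linarith
    then show ?thesis using bb by (simp add: mult_le_0_iff)
  qed
  have "inner \<mu> \<mu>0 > 0" using bb by (simp add: bb_def)
  show ?thesis by (rule that[OF m0(1) m0(2) \<open>inner \<mu> \<mu>0 > 0\<close> Q0])
qed

lemma cornerE2:
  assumes pK: "p \<in> K"
    and e1: "norm \<nu> = 1" "norm \<mu>0 = 1" "inner \<nu> \<mu>0 = 0"
    and Q: "\<And>u. u \<in> K \<Longrightarrow> inner (u - p) \<nu> \<le> 0 \<and> inner (u - p) \<mu>0 \<le> 0"
    and z'K: "z' \<in> K" and mu': "norm \<mu>' = 1" "\<And>u. u \<in> K \<Longrightarrow> inner (u - z') \<mu>' \<le> 0"
    and k: "inner \<mu>' \<nu> < 0" "inner \<mu>' \<mu>0 \<ge> 0"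
    and c: "c \<in> interior K" "Zc \<le> inner (c - p) (-\<mu>0)" "Zc > 0"
    and eps: "\<epsilon> > 0" and dz: "dist z' p < \<epsilon>/8" "dist z' p < Zc/4"
  shows "depth K \<le> \<epsilon>"
proof -
  define \<kappa> where "\<kappa> = - inner \<mu>' \<nu>"
  have kp: "\<kappa> > 0" using k by (simp add: \<kappa>_def)
  define \<eta> where "\<eta> = min (Zc/4) (min (\<epsilon>/8) (\<kappa>*\<epsilon>/8))"
  have eta: "\<eta> > 0" "\<eta> \<le> Zc/4" "\<eta> \<le> \<epsilon>/8" "\<eta> \<le> \<kappa>*\<epsilon>/8" using c(3) eps kp by (auto simp: \<eta>_def)
  have "inner (z' - p) (-\<mu>0) \<le> dist z' p"
    using inner_le_norm1[of "-\<mu>0" "z' - p"] e1(2) by (simp add: dist_norm)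
  then have cc: "inner (z' - p) (-\<mu>0) + \<eta> < inner (c - p) (-\<mu>0)" using dz(2) eta c(2,3) by linarith
  have "depth K \<le> 4 * dist z' p + 2*\<eta> + 2*\<eta> / \<kappa>"
    using cornerE[OF cd pK e1 Q z'K mu' k eta(1) c(1) cc] by (simp add: \<kappa>_def)
  also have "2*\<eta> \<le> 2*(\<kappa>*\<epsilon>/8)" using eta(4) by linarith
  then have "2*\<eta> / \<kappa> \<le> 2*(\<kappa>*\<epsilon>/8) / \<kappa>" using kp by (intro divide_right_mono) auto
  also have "2*(\<kappa>*\<epsilon>/8) / \<kappa> = \<epsilon>/4" using kp by simp
  finally show ?thesis using dz(1) eta(3) by linarith
qed

end

context
  fixes K :: "complex set"
  assumes cd: "convex_domain K"
begin

lemma depth_pos_PP: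
  assumes dp: "depth K > 0"
  shows "\<exists>t. 0 < t \<and> t < min_width K \<and> PP K t"
proof (rule ccontr)
  assume neg: "\<not> ?thesis"
  define w where "w = min_width K"
  have wp: "w > 0" using min_width_pos[OF cd] by (simp add: w_def)
  define T where "T n = w / (real n + 2)" for n
  have T: "0 < T n" "T n < w" for n
  proof -
    show "0 < T n" using wp by (simp add: T_def)
    have "w / (real n + 2) < w / 1" by (rule divide_strict_left_mono) (use wp in auto)
    then show "T n < w" by (simp add: T_def)
  qed
  have ex: "\<exists>x. outer_normal K (fst x) (fst (snd x)) \<and> outer_normal K (fst (snd (snd x))) (snd (snd (snd x)))
       \<and> dist (fst x) (fst (snd (snd x))) \<le> T n \<and> inner (fst (snd x)) (snd (snd (snd x))) < 0" for n
  proof -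
    have "\<not> PP K (T n)" using neg T[of n] by (auto simp: w_def)
    then obtain z z' \<nu> \<mu> where "outer_normal K z \<nu>" "outer_normal K z' \<mu>" "dist z z' \<le> T n" "\<not> 0 \<le> inner \<nu> \<mu>"
      unfolding PP_def[OF cd] by blast
    then show ?thesis by (intro exI[of _ "(z, \<nu>, z', \<mu>)"]) auto
  qed
  obtain f where f: "\<And>n. outer_normal K (fst (f n)) (fst (snd (f n))) \<and> outer_normal K (fst (snd (snd (f n)))) (snd (snd (snd (f n))))
       \<and> dist (fst (f n)) (fst (snd (snd (f n)))) \<le> T n \<and> inner (fst (snd (f n))) (snd (snd (snd (f n)))) < 0"
  proof -
    have ex': "\<forall>n. \<exists>x. outer_normal K (fst x) (fst (snd x)) \<and> outer_normal K (fst (snd (snd x))) (snd (snd (snd x)))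
       \<and> dist (fst x) (fst (snd (snd x))) \<le> T n \<and> inner (fst (snd x)) (snd (snd (snd x))) < 0"
      using ex by blast
    from choice[OF ex'] obtain f where "\<forall>n. outer_normal K (fst (f n)) (fst (snd (f n))) \<and> outer_normal K (fst (snd (snd (f n)))) (snd (snd (snd (f n))))
       \<and> dist (fst (f n)) (fst (snd (snd (f n)))) \<le> T n \<and> inner (fst (snd (f n))) (snd (snd (snd (f n)))) < 0"
      by blast
    then show ?thesis using that by blast
  qed
  define zs where "zs n = fst (f n)" for n
  define ns where "ns n = fst (snd (f n))" for n
  define zs' where "zs' n = fst (snd (snd (f n)))" for n
  define ms where "ms n = snd (snd (snd (f n)))" for n
  have on1: "outer_normal K (zs n) (ns n)" and on2: "outer_normal K (zs' n) (ms n)"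
    and dzz: "dist (zs n) (zs' n) \<le> T n" and neg_in: "inner (ns n) (ms n) < 0" for n
    using f[of n] by (auto simp: zs_def ns_def zs'_def ms_def)
  have zsK: "zs n \<in> frontier K" "norm (ns n) = 1" "zs' n \<in> K" "norm (ms n) = 1"
    "\<And>u. u \<in> K \<Longrightarrow> inner (u - zs n) (ns n) \<le> 0" "\<And>u. u \<in> K \<Longrightarrow> inner (u - zs' n) (ms n) \<le> 0" for n
    using on1[of n] on2[of n] frontier_sub[OF cd] by (auto simp: outer_normal_iff)
  define g where "g n = (zs n, ns n, ms n)" for n
  define S where "S = frontier K \<times> (cball (0::complex) 1 \<times> cball (0::complex) 1)"
  have Sc: "compact S" unfolding S_def
    using cK(1)[OF cd] by (intro compact_Times compact_cball) (simp add: compact_frontier)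
  have gS: "\<forall>n. g n \<in> S" using zsK by (auto simp: g_def S_def)
  obtain l r where l: "l \<in> S" and r: "strict_mono r" and lim: "(g \<circ> r) \<longlonglongrightarrow> l"
    using seq_compactE[OF compact_imp_seq_compact[OF Sc] gS] by blast
  obtain p \<nu> \<mu> where lpm: "l = (p, \<nu>, \<mu>)" by (metis prod.exhaust)
  have tz: "(\<lambda>n. zs (r n)) \<longlonglongrightarrow> p" using tendsto_fst[OF lim] by (simp add: lpm g_def o_def)
  have tn: "(\<lambda>n. ns (r n)) \<longlonglongrightarrow> \<nu>" using tendsto_fst[OF tendsto_snd[OF lim]] by (simp add: lpm g_def o_def)
  have tm: "(\<lambda>n. ms (r n)) \<longlonglongrightarrow> \<mu>" using tendsto_snd[OF tendsto_snd[OF lim]] by (simp add: lpm g_def o_def)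
  have T0: "(\<lambda>n. T (r n)) \<longlonglongrightarrow> 0"
  proof -
    have "LIM n sequentially. 2 + real n :> at_top"
      by (rule filterlim_tendsto_add_at_top[OF tendsto_const filterlim_real_sequentially])
    then have "LIM n sequentially. real n + 2 :> at_top" by (simp add: add.commute)
    then have "(\<lambda>n. w / (real n + 2)) \<longlonglongrightarrow> 0"
      by (intro tendsto_divide_0[OF tendsto_const] filterlim_at_top_imp_at_infinity)
    then have "(\<lambda>n. T n) \<longlonglongrightarrow> 0" by (simp add: T_def)
    then show ?thesis using filterlim_compose[OF _ filterlim_subseq[OF r]] by blast
  qed
  have tz': "(\<lambda>n. zs' (r n)) \<longlonglongrightarrow> p"
  proof -
    have "(\<lambda>n. zs' (r n) - zs (r n)) \<longlonglongrightarrow> 0"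
    proof (rule Lim_null_comparison[OF _ T0])
      show "eventually (\<lambda>n. norm (zs' (r n) - zs (r n)) \<le> T (r n)) sequentially"
        using dzz by (simp add: dist_norm norm_minus_commute)
    qed
    from tendsto_add[OF this tz] show ?thesis by simp
  qed
  have pf: "p \<in> frontier K" using closed_sequentially[OF frontier_closed _ tz] zsK(1) by blast
  have pK: "p \<in> K" using pf frontier_sub[OF cd] by blast
  have nrm: "norm \<nu> = 1" "norm \<mu> = 1"
  proof -
    have "(\<lambda>n. norm (ns (r n))) \<longlonglongrightarrow> norm \<nu>" by (rule tendsto_norm[OF tn])
    moreover have "(\<lambda>n. norm (ns (r n))) \<longlonglongrightarrow> 1" using zsK(2) by simp
    ultimately show "norm \<nu> = 1" using LIMSEQ_unique by blast
    have "(\<lambda>n. norm (ms (r n))) \<longlonglongrightarrow> norm \<mu>" by (rule tendsto_norm[OF tm])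
    moreover have "(\<lambda>n. norm (ms (r n))) \<longlonglongrightarrow> 1" using zsK(4) by simp
    ultimately show "norm \<mu> = 1" using LIMSEQ_unique by blast
  qed
  have Qn: "inner (u - p) \<nu> \<le> 0" if "u \<in> K" for u
  proof (rule LIMSEQ_le_const2)
    show "(\<lambda>n. inner (u - zs (r n)) (ns (r n))) \<longlonglongrightarrow> inner (u - p) \<nu>"
      by (intro tendsto_intros tz tn)
    show "\<exists>N. \<forall>n\<ge>N. inner (u - zs (r n)) (ns (r n)) \<le> 0" using zsK(5) that by blast
  qed
  have Qm: "inner (u - p) \<mu> \<le> 0" if "u \<in> K" for u
  proof (rule LIMSEQ_le_const2)
    show "(\<lambda>n. inner (u - zs' (r n)) (ms (r n))) \<longlonglongrightarrow> inner (u - p) \<mu>"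
      by (intro tendsto_intros tz' tm)
    show "\<exists>N. \<forall>n\<ge>N. inner (u - zs' (r n)) (ms (r n)) \<le> 0" using zsK(6) that by blast
  qed
  have nm: "inner \<nu> \<mu> \<le> 0"
  proof (rule LIMSEQ_le_const2)
    show "(\<lambda>n. inner (ns (r n)) (ms (r n))) \<longlonglongrightarrow> inner \<nu> \<mu>" by (intro tendsto_intros tn tm)
    show "\<exists>N. \<forall>n\<ge>N. inner (ns (r n)) (ms (r n)) \<le> 0" using neg_in less_imp_le by blast
  qed
  have onp: "outer_normal K p \<nu>" "outer_normal K p \<mu>"
    using pf nrm Qn Qm by (auto simp: outer_normal_iff)
  obtain \<mu>0 where m0: "norm \<mu>0 = 1" "inner \<nu> \<mu>0 = 0" "inner \<mu> \<mu>0 > 0"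
    "\<And>u. u \<in> K \<Longrightarrow> inner (u - p) \<mu>0 \<le> 0"
    using frame[OF cd onp nm] by blast
  obtain c where c: "c \<in> interior K" using cK(6)[OF cd] by blast
  define Zc where "Zc = min (inner (c - p) (-\<mu>0)) (inner (c - p) (-\<nu>))"
  have Zc: "Zc > 0" "Zc \<le> inner (c - p) (-\<mu>0)" "Zc \<le> inner (c - p) (-\<nu>)"
    using interior_strict[OF cd c m0(1) m0(4)] interior_strict[OF cd c nrm(1) Qn]
    by (auto simp: Zc_def)
  define \<epsilon> where "\<epsilon> = depth K / 2"
  have ep: "\<epsilon> > 0" using dp by (simp add: \<epsilon>_def)
  define d where "d = min (\<epsilon>/8) (Zc/4)"
  have dp': "d > 0" using ep Zc by (simp add: d_def)
  have ev1: "eventually (\<lambda>n. dist (zs (r n)) p < d) sequentially" using tz dp' by (rule tendstoD)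
  have ev2: "eventually (\<lambda>n. dist (zs' (r n)) p < d) sequentially" using tz' dp' by (rule tendstoD)
  have ev3: "eventually (\<lambda>n. inner (ms (r n)) \<mu>0 > 0) sequentially"
    using order_tendstoD(1)[OF tendsto_inner[OF tm tendsto_const] m0(3)] .
  have nn: "inner \<nu> \<nu> > 0" using nrm by (simp add: power2_norm_eq_inner[symmetric])
  have ev4: "eventually (\<lambda>n. inner (ns (r n)) \<nu> > 0) sequentially"
    using order_tendstoD(1)[OF tendsto_inner[OF tn tendsto_const] nn] .
  obtain n where n: "dist (zs (r n)) p < d" "dist (zs' (r n)) p < d"
    "inner (ms (r n)) \<mu>0 > 0" "inner (ns (r n)) \<nu> > 0"
    using eventually_happens'[OF _ eventually_conj[OF ev1 eventually_conj[OF ev2 eventually_conj[OF ev3 ev4]]]]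
    by auto
  define k where "k = r n"
  have Q: "\<And>u. u \<in> K \<Longrightarrow> inner (u - p) \<nu> \<le> 0 \<and> inner (u - p) \<mu>0 \<le> 0" using Qn m0(4) by blast
  have Q': "\<And>u. u \<in> K \<Longrightarrow> inner (u - p) \<mu>0 \<le> 0 \<and> inner (u - p) \<nu> \<le> 0" using Qn m0(4) by blast
  have dd: "d \<le> \<epsilon>/8" "d \<le> Zc/4" by (auto simp: d_def)
  have "depth K \<le> \<epsilon>"
  proof (cases "inner (ms k) \<nu> < 0")
    case True
    have z6: "\<And>u. u \<in> K \<Longrightarrow> inner (u - zs' k) (ms k) \<le> 0" using zsK(6) by blast
    show ?thesis
      by (rule cornerE2[OF cd pK nrm(1) m0(1) m0(2) Q zsK(3)[of k] zsK(4)[of k] z6 True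
            less_imp_le[OF n(3)[folded k_def]] c Zc(2) Zc(1) ep])
        (use n(2) dd in \<open>auto simp: k_def\<close>)
  next
    case False
    have PS: "inner (ns k) (ms k) = inner (ns k) \<nu> * inner (ms k) \<nu> + inner (ns k) \<mu>0 * inner (ms k) \<mu>0"
      by (rule parseval[OF nrm(1) m0(1) m0(2)])
    have "0 \<le> inner (ns k) \<nu> * inner (ms k) \<nu>" using False n(4) by (simp add: k_def)
    then have "inner (ns k) \<mu>0 * inner (ms k) \<mu>0 < 0" using PS neg_in[of k] by linarith
    then have neg2: "inner (ns k) \<mu>0 < 0" using n(3) by (simp add: k_def mult_less_0_iff)
    have ort: "inner \<mu>0 \<nu> = 0" using m0(2) by (simp add: inner_commute)
    have z5: "\<And>u. u \<in> K \<Longrightarrow> inner (u - zs k) (ns k) \<le> 0" using zsK(5) by blast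
    have zK: "zs k \<in> K" using zsK(1)[of k] frontier_sub[OF cd] by blast
    show ?thesis
      by (rule cornerE2[OF cd pK m0(1) nrm(1) ort Q' zK zsK(2)[of k] z5 neg2
            less_imp_le[OF n(4)[folded k_def]] c Zc(3) Zc(1) ep])
        (use n(1) dd in \<open>auto simp: k_def\<close>)
  qed
  then show False using dp by (simp add: \<epsilon>_def)
qed

end

theorem proposition2:
  fixes K :: "complex set"
  assumes "convex_domain K"
  shows "(depth K > 0 \<longleftrightarrow>
           (\<exists>t. 0 < t \<and> t < min_width K \<and> (\<forall>\<tau>. 0 \<le> \<tau> \<and> \<tau> \<le> t \<longrightarrow> omegaK K \<tau> \<le> pi / 2))) \<and>
         (\<forall>s. 0 \<le> s \<and> s \<le> min_width K \<and> omega_minus K s \<le> pi / 2 \<and> pi / 2 \<le> omega_plus K s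
           \<longrightarrow> depth K \<ge> s)"
proof -
  note cd = assms
  have anti: "PP K t \<Longrightarrow> \<tau> \<le> t \<Longrightarrow> PP K \<tau>" for t \<tau>
    unfolding PP_def[OF cd] by (meson order_trans)
  have part1: "depth K > 0 \<longleftrightarrow>
           (\<exists>t. 0 < t \<and> t < min_width K \<and> (\<forall>\<tau>. 0 \<le> \<tau> \<and> \<tau> \<le> t \<longrightarrow> omegaK K \<tau> \<le> pi / 2))"
  proof
    assume "depth K > 0"
    then obtain t where t: "0 < t" "t < min_width K" "PP K t" using depth_pos_PP[OF cd] by blast
    have "omegaK K \<tau> \<le> pi / 2" if "0 \<le> \<tau>" "\<tau> \<le> t" for \<tau>
      using omega_le_iff[OF cd that(1)] anti[OF t(3) that(2)] by blast
    then show "\<exists>t. 0 < t \<and> t < min_width K \<and> (\<forall>\<tau>. 0 \<le> \<tau> \<and> \<tau> \<le> t \<longrightarrow> omegaK K \<tau> \<le> pi / 2)"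
      using t by blast
  next
    assume "\<exists>t. 0 < t \<and> t < min_width K \<and> (\<forall>\<tau>. 0 \<le> \<tau> \<and> \<tau> \<le> t \<longrightarrow> omegaK K \<tau> \<le> pi / 2)"
    then obtain t where t: "0 < t" "omegaK K t \<le> pi / 2" by auto
    then have "PP K t" using omega_le_iff[OF cd] by simp
    then have "t \<le> depth K" by (rule PP_depth[OF cd])
    then show "depth K > 0" using t by simp
  qed
  have part2: "depth K \<ge> s" if s: "0 \<le> s" "omega_minus K s \<le> pi / 2" for s
  proof (cases "s = 0")
    case True
    then show ?thesis using depth_ge0[OF cd] by simp
  next
    case False
    then have sp: "s > 0" using s by simp
    show ?thesis
    proof (rule dense_le_bounded[OF sp])
      fix r assume r: "0 < r" "r < s"
      have "omegaK K r \<le> pi / 2" using omega_minus_ge[OF cd sp _ r(2)] r(1) s(2) by simp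
      then have "PP K r" using omega_le_iff[OF cd] r(1) by simp
      then show "r \<le> depth K" by (rule PP_depth[OF cd])
    qed
  qed
  show ?thesis using part1 part2 by blast
qed

end
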